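(* Let $(M,P,g)\in\mathcal W_1$, $\dim M=2n\ge4$, and let $D$ be the connection in the context. Then the Weyl tensors of $\nabla$ and $D$ coincide: $W=W'$, where $$W=R-\frac{1}{2(n-1)}\Big\{\psi_1(\rho)-\frac{\tau}{2n-1}\pi_1\Big\},\qquad W'=R'-\frac{1}{2(n-1)}\Big\{\psi_1(\rho')-\frac{\tau'}{2n-1}\pi_1\Big\}.$$
   Context: A Riemannian almost product manifold $(M,P,g)$: smooth manifold with $(1,1)$-tensor $P$ and Riemannian metric $g$, $P^2=\mathrm{id}$, $g(Px,Py)=g(x,y)$; here $\operatorname{tr}P=0$. $\nabla$ is the Levi-Civita connection, $F(x,y,z)=g((\nabla_xP)y,z)$, Lee form $\theta(x)=g^{ij}F(e_i,e_j,x)$, $\Omega$ with $g(\Omega,x)=\theta(x)$. Class $\mathcal W_1$: $F(x,y,z)=\frac{1}{2n}\{g(x,y)\theta(z)+g(x,z)\theta(y)-g(x,Py)\theta(Pz)-g(x,Pz)\theta(Py)\}$. $D_xy=\nabla_xy+\frac{1}{2n}\{g(x,y)P\Omega-\theta(Py)x\}$. Curvatures: $R(x,y,z,w)=g(\nabla_x\nabla_yz-\nabla_y\nabla_xz-\nabla_{[x,y]}z,w)$, $\rho(y,z)=g^{ij}R(e_i,y,z,e_j)$, $\tau=g^{ij}\rho(e_i,e_j)$; $R',\rho',\tau'$ analogously for $D$. For a $(0,2)$-tensor $S$: $\psi_1(S)(x,y,z,w)=g(y,z)S(x,w)-g(x,z)S(y,w)+S(y,z)g(x,w)-S(x,z)g(y,w)$;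 $\pi_1(x,y,z,w)=g(y,z)g(x,w)-g(x,z)g(y,w)$. *)

theory Defs
  imports "HOL-Analysis.Analysis"
begin

text \<open>Local (coordinate-chart) model of a Riemannian almost product manifold.
  Points of the chart domain U and tangent vectors are elements of real^'m,
  the coordinate basis is axis i 1. Vector fields are maps real^'m => real^'m.\<close>

type_synonym 'm vfield = "real^'m \<Rightarrow> real^'m"

definition pd :: "'m::finite \<Rightarrow> (real^'m \<Rightarrow> real) \<Rightarrow> real^'m \<Rightarrow> real" where
  "pd k f p = deriv (\<lambda>t. f (p + t *\<^sub>R axis k 1)) 0"

fun iter_pd :: "'m::finite list \<Rightarrow> (real^'m \<Rightarrow> real) \<Rightarrow> real^'m \<Rightarrow> real" where
  "iter_pd [] f = f"
| "iter_pd (k # ks) f = pd k (iter_pd ks f)"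

definition smooth_fun_on :: "(real^'m::finite) set \<Rightarrow> (real^'m \<Rightarrow> real) \<Rightarrow> bool" where
  "smooth_fun_on U f \<longleftrightarrow>
     (\<forall>ks. continuous_on U (iter_pd ks f) \<and>
        (\<forall>k. \<forall>p\<in>U. (\<lambda>t. iter_pd ks f (p + t *\<^sub>R axis k 1)) differentiable (at 0)))"

text \<open>The metric g at p as the Gram matrix w.r.t. coordinate basis.\<close>
definition gv :: "(real^'m \<Rightarrow> real^'m^'m) \<Rightarrow> real^'m \<Rightarrow> real^'m \<Rightarrow> real^'m::finite \<Rightarrow> real" where
  "gv g p u v = u \<bullet> (g p *v v)"

definition ginv :: "(real^'m \<Rightarrow> real^'m^'m) \<Rightarrow> real^'m \<Rightarrow> real^'m^'m::finite" where
  "ginv g p = matrix_inv (g p)"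

definition riemannian_metric_on :: "(real^'m::finite) set \<Rightarrow> (real^'m \<Rightarrow> real^'m^'m) \<Rightarrow> bool" where
  "riemannian_metric_on U g \<longleftrightarrow>
     (\<forall>i j. smooth_fun_on U (\<lambda>p. g p $ i $ j)) \<and>
     (\<forall>p\<in>U. transpose (g p) = g p \<and> (\<forall>u. u \<noteq> 0 \<longrightarrow> gv g p u u > 0))"

definition almost_product_on :: "(real^'m::finite) set \<Rightarrow> (real^'m \<Rightarrow> real^'m^'m) \<Rightarrow> (real^'m \<Rightarrow> real^'m^'m) \<Rightarrow> bool" where
  "almost_product_on U P g \<longleftrightarrow>
     (\<forall>i j. smooth_fun_on U (\<lambda>p. P p $ i $ j)) \<and>
     (\<forall>p\<in>U. P p ** P p = mat 1 \<and>
        (\<forall>u v. gv g p (P p *v u) (P p *v v) = gv g p u v) \<and> trace (P p) = 0)"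

text \<open>Christoffel symbols of the Levi-Civita connection:
  nabla_{d_i} d_j = sum_s christ g p i j s d_s.\<close>
definition christ :: "(real^'m \<Rightarrow> real^'m^'m) \<Rightarrow> real^'m \<Rightarrow> 'm \<Rightarrow> 'm \<Rightarrow> 'm::finite \<Rightarrow> real" where
  "christ g p i j s = (1/2) * (\<Sum>l\<in>UNIV. ginv g p $ s $ l *
      (pd i (\<lambda>q. g q $ j $ l) p + pd j (\<lambda>q. g q $ i $ l) p - pd l (\<lambda>q. g q $ i $ j) p))"

definition LC :: "(real^'m \<Rightarrow> real^'m^'m) \<Rightarrow> 'm vfield \<Rightarrow> 'm vfield \<Rightarrow> 'm::finite vfield" where
  "LC g X Y p = (\<chi> s. \<Sum>i\<in>UNIV. X p $ i *
      (pd i (\<lambda>q. Y q $ s) p + (\<Sum>j\<in>UNIV. christ g p i j s * Y p $ j)))"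

definition lie :: "'m vfield \<Rightarrow> 'm vfield \<Rightarrow> 'm::finite vfield" where
  "lie X Y p = (\<chi> s. \<Sum>i\<in>UNIV. X p $ i * pd i (\<lambda>q. Y q $ s) p - Y p $ i * pd i (\<lambda>q. X q $ s) p)"

text \<open>Curvature R(x,y,z,w) = g(nabla_x nabla_y z - nabla_y nabla_x z - nabla_[x,y] z, w) of a
  connection cv, evaluated at p on tangent vectors (extended to constant vector fields).\<close>
definition curv :: "(real^'m \<Rightarrow> real^'m^'m) \<Rightarrow> ('m vfield \<Rightarrow> 'm vfield \<Rightarrow> 'm vfield)
    \<Rightarrow> real^'m \<Rightarrow> real^'m \<Rightarrow> real^'m \<Rightarrow> real^'m \<Rightarrow> real^'m::finite \<Rightarrow> real" where
  "curv g cv p x y z w =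
     (let X = (\<lambda>_. x); Y = (\<lambda>_. y); Z = (\<lambda>_. z) in
      gv g p (cv X (cv Y Z) p - cv Y (cv X Z) p - cv (lie X Y) Z p) w)"

definition ricci :: "(real^'m \<Rightarrow> real^'m^'m) \<Rightarrow> ('m vfield \<Rightarrow> 'm vfield \<Rightarrow> 'm vfield)
    \<Rightarrow> real^'m \<Rightarrow> real^'m \<Rightarrow> real^'m::finite \<Rightarrow> real" where
  "ricci g cv p y z = (\<Sum>i\<in>UNIV. \<Sum>j\<in>UNIV. ginv g p $ i $ j * curv g cv p (axis i 1) y z (axis j 1))"

definition scal :: "(real^'m \<Rightarrow> real^'m^'m) \<Rightarrow> ('m vfield \<Rightarrow> 'm vfield \<Rightarrow> 'm vfield)
    \<Rightarrow> real^'m::finite \<Rightarrow> real" where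
  "scal g cv p = (\<Sum>i\<in>UNIV. \<Sum>j\<in>UNIV. ginv g p $ i $ j * ricci g cv p (axis i 1) (axis j 1))"

definition psi1 :: "(real^'m \<Rightarrow> real^'m \<Rightarrow> real^'m \<Rightarrow> real) \<Rightarrow> (real^'m \<Rightarrow> real^'m \<Rightarrow> real^'m \<Rightarrow> real)
    \<Rightarrow> real^'m \<Rightarrow> real^'m \<Rightarrow> real^'m \<Rightarrow> real^'m \<Rightarrow> real^'m::finite \<Rightarrow> real" where
  "psi1 G S p x y z w = G p y z * S p x w - G p x z * S p y w + S p y z * G p x w - S p x z * G p y w"

definition pi1 :: "(real^'m \<Rightarrow> real^'m \<Rightarrow> real^'m \<Rightarrow> real)
    \<Rightarrow> real^'m \<Rightarrow> real^'m \<Rightarrow> real^'m \<Rightarrow> real^'m \<Rightarrow> real^'m::finite \<Rightarrow> real" where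
  "pi1 G p x y z w = G p y z * G p x w - G p x z * G p y w"

text \<open>Weyl tensor of connection cv (with n = half the dimension).\<close>
definition weyl :: "nat \<Rightarrow> (real^'m \<Rightarrow> real^'m^'m) \<Rightarrow> ('m vfield \<Rightarrow> 'm vfield \<Rightarrow> 'm vfield)
    \<Rightarrow> real^'m \<Rightarrow> real^'m \<Rightarrow> real^'m \<Rightarrow> real^'m \<Rightarrow> real^'m::finite \<Rightarrow> real" where
  "weyl n g cv p x y z w =
     curv g cv p x y z w - (1 / (2 * (real n - 1))) *
       (psi1 (gv g) (ricci g cv) p x y z w - (scal g cv p / (2 * real n - 1)) * pi1 (gv g) p x y z w)"

text \<open>F(x,y,z) = g((nabla_x P) y, z), with (nabla_x P) y = nabla_x (P y) - P (nabla_x y).\<close>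
definition Ften :: "(real^'m \<Rightarrow> real^'m^'m) \<Rightarrow> (real^'m \<Rightarrow> real^'m^'m)
    \<Rightarrow> real^'m \<Rightarrow> real^'m \<Rightarrow> real^'m \<Rightarrow> real^'m::finite \<Rightarrow> real" where
  "Ften g P p x y z =
     gv g p (LC g (\<lambda>_. x) (\<lambda>q. P q *v y) p - P p *v LC g (\<lambda>_. x) (\<lambda>_. y) p) z"

definition lee :: "(real^'m \<Rightarrow> real^'m^'m) \<Rightarrow> (real^'m \<Rightarrow> real^'m^'m)
    \<Rightarrow> real^'m \<Rightarrow> real^'m::finite \<Rightarrow> real" where
  "lee g P p x = (\<Sum>i\<in>UNIV. \<Sum>j\<in>UNIV. ginv g p $ i $ j * Ften g P p (axis i 1) (axis j 1) x)"

text \<open>Omega with g(Omega, x) = theta(x).\<close>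
definition Omega :: "(real^'m \<Rightarrow> real^'m^'m) \<Rightarrow> (real^'m \<Rightarrow> real^'m^'m) \<Rightarrow> 'm::finite vfield" where
  "Omega g P p = ginv g p *v (\<chi> k. lee g P p (axis k 1))"

definition class_W1 :: "nat \<Rightarrow> (real^'m::finite) set \<Rightarrow> (real^'m \<Rightarrow> real^'m^'m) \<Rightarrow> (real^'m \<Rightarrow> real^'m^'m) \<Rightarrow> bool" where
  "class_W1 n U P g \<longleftrightarrow> (\<forall>p\<in>U. \<forall>x y z.
     Ften g P p x y z = (1 / (2 * real n)) *
       (gv g p x y * lee g P p z + gv g p x z * lee g P p y
        - gv g p x (P p *v y) * lee g P p (P p *v z) - gv g p x (P p *v z) * lee g P p (P p *v y)))"

definition Dconn :: "nat \<Rightarrow> (real^'m \<Rightarrow> real^'m^'m) \<Rightarrow> (real^'m \<Rightarrow> real^'m^'m)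
    \<Rightarrow> 'm vfield \<Rightarrow> 'm vfield \<Rightarrow> 'm::finite vfield" where
  "Dconn n g P X Y p = LC g X Y p + (1 / (2 * real n)) *\<^sub>R
     (gv g p (X p) (Y p) *\<^sub>R (P p *v Omega g P p) - lee g P p (P p *v Y p) *\<^sub>R X p)"

end

theory Submission
  imports Defs
begin


definition dl :: "'m::finite \<Rightarrow> (real^'m \<Rightarrow> real) \<Rightarrow> real^'m \<Rightarrow> bool" where
  "dl k f p \<longleftrightarrow> (\<lambda>t. f (p + t *\<^sub>R axis k 1)) differentiable (at 0)"

lemma pd_DERIV: "dl k f p \<Longrightarrow> ((\<lambda>t. f (p + t *\<^sub>R axis k 1)) has_real_derivative pd k f p) (at 0)"
  unfolding dl_def pd_def by (simp add: DERIV_deriv_iff_real_differentiable)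

lemma dl_const[simp]: "dl k (\<lambda>q. c) p" unfolding dl_def by simp
lemma pd_const[simp]: "pd k (\<lambda>q. c) p = 0" unfolding pd_def by (rule DERIV_imp_deriv) simp
lemma dl_add: "dl k f p \<Longrightarrow> dl k h p \<Longrightarrow> dl k (\<lambda>q. f q + h q) p" unfolding dl_def by simp
lemma dl_diff: "dl k f p \<Longrightarrow> dl k h p \<Longrightarrow> dl k (\<lambda>q. f q - h q) p" unfolding dl_def by simp
lemma dl_mult: "dl k f p \<Longrightarrow> dl k h p \<Longrightarrow> dl k (\<lambda>q. f q * h q) p" unfolding dl_def by simp
lemma dl_div: "dl k f p \<Longrightarrow> dl k h p \<Longrightarrow> h p \<noteq> 0 \<Longrightarrow> dl k (\<lambda>q. f q / h q) p"
  unfolding dl_def by (intro differentiable_divide) auto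
lemma dl_sum: "finite A \<Longrightarrow> (\<And>a. a \<in> A \<Longrightarrow> dl k (f a) p) \<Longrightarrow> dl k (\<lambda>q. \<Sum>a\<in>A. f a q) p"
  unfolding dl_def by (intro differentiable_sum) auto
lemma dl_prod: "finite A \<Longrightarrow> (\<And>a. a \<in> A \<Longrightarrow> dl k (f a) p) \<Longrightarrow> dl k (\<lambda>q. \<Prod>a\<in>A. f a q) p"
proof (induction A rule: finite_induct)
  case empty then show ?case by simp
next
  case (insert a A) then show ?case by (simp add: dl_mult)
qed

lemma pd_add: "dl k f p \<Longrightarrow> dl k h p \<Longrightarrow> pd k (\<lambda>q. f q + h q) p = pd k f p + pd k h p"
  unfolding pd_def[of k "\<lambda>q. f q + h q"]
  by (rule DERIV_imp_deriv, rule DERIV_add[OF pd_DERIV pd_DERIV])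
lemma pd_diff: "dl k f p \<Longrightarrow> dl k h p \<Longrightarrow> pd k (\<lambda>q. f q - h q) p = pd k f p - pd k h p"
  unfolding pd_def[of k "\<lambda>q. f q - h q"]
  by (rule DERIV_imp_deriv, rule DERIV_diff[OF pd_DERIV pd_DERIV])
lemma pd_mult: "dl k f p \<Longrightarrow> dl k h p \<Longrightarrow> pd k (\<lambda>q. f q * h q) p = pd k f p * h p + f p * pd k h p"
  unfolding pd_def[of k "\<lambda>q. f q * h q"]
proof (rule DERIV_imp_deriv)
  assume a: "dl k f p" "dl k h p"
  show "((\<lambda>t. f (p + t *\<^sub>R axis k 1) * h (p + t *\<^sub>R axis k 1)) has_real_derivative pd k f p * h p + f p * pd k h p) (at 0)"
    using DERIV_mult[OF pd_DERIV[OF a(1)] pd_DERIV[OF a(2)]] by (simp add: mult.commute)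
qed
lemma pd_sum: "finite A \<Longrightarrow> (\<And>a. a \<in> A \<Longrightarrow> dl k (f a) p) \<Longrightarrow> pd k (\<lambda>q. \<Sum>a\<in>A. f a q) p = (\<Sum>a\<in>A. pd k (f a) p)"
  unfolding pd_def[of k "\<lambda>q. \<Sum>a\<in>A. f a q"]
  by (rule DERIV_imp_deriv, rule DERIV_sum) (rule pd_DERIV, auto)

lemma ev_line: fixes p :: "real^'m::finite" assumes "open U" "p \<in> U" shows "eventually (\<lambda>t. p + t *\<^sub>R axis k 1 \<in> U) (nhds (0::real))"
proof -
  have "eventually (\<lambda>t. t \<in> (\<lambda>t::real. p + t *\<^sub>R axis k 1) -` U) (nhds 0)"
    using assms by (intro eventually_nhds_in_open open_vimage) (auto intro!: continuous_on_add continuous_on_const continuous_on_scaleR continuous_on_id)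
  then show ?thesis by simp
qed

lemma pd_cong: "open U \<Longrightarrow> p \<in> U \<Longrightarrow> (\<And>q. q \<in> U \<Longrightarrow> f q = h q) \<Longrightarrow> pd k f p = pd k h p"
  unfolding pd_def by (rule deriv_cong_ev[OF eventually_mono[OF ev_line]]) auto

lemma dl_cong: "open U \<Longrightarrow> p \<in> U \<Longrightarrow> (\<And>q. q \<in> U \<Longrightarrow> f q = h q) \<Longrightarrow> dl k f p = dl k h p"
  unfolding dl_def real_differentiable_def
  by (intro ex_cong1 DERIV_cong_ev[OF refl eventually_mono[OF ev_line] refl]) auto

lemma smooth_dl: "smooth_fun_on U f \<Longrightarrow> p \<in> U \<Longrightarrow> dl k f p"
  unfolding smooth_fun_on_def dl_def by (metis iter_pd.simps(1))
lemma smooth_dl_pd: "smooth_fun_on U f \<Longrightarrow> p \<in> U \<Longrightarrow> dl k (pd l f) p"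
  unfolding smooth_fun_on_def dl_def by (metis iter_pd.simps)

lemma dl_det: "(\<And>i j. dl k (\<lambda>q. M q $ i $ j) p) \<Longrightarrow> dl k (\<lambda>q. det (M q)) p"
  unfolding det_def by (intro dl_sum dl_mult dl_prod dl_const) auto

lemma inv_entry:
  fixes A :: "real^'n::finite^'n"
  assumes "invertible A"
  shows "matrix_inv A $ a $ b = det (\<chi> i j. if j = a then axis b 1 $ i else A$i$j) / det A"
proof -
  have AB: "A ** matrix_inv A = mat 1" "matrix_inv A ** A = mat 1"
    using assms unfolding invertible_def matrix_inv_def by (metis (mono_tags, lifting) someI_ex)+
  have d: "det A \<noteq> 0" using assms invertible_det_nz by blast
  have "A *v (matrix_inv A *v axis b 1) = axis b 1"
    by (simp add: matrix_vector_mul_assoc AB)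
  then have "matrix_inv A *v axis b 1 = (\<chi> k. det(\<chi> i j. if j=k then axis b 1$i else A$i$j) / det A)"
    using cramer[OF d] by blast
  then have "(matrix_inv A *v axis b 1) $ a = det (\<chi> i j. if j = a then axis b 1 $ i else A$i$j) / det A"
    by simp
  then show ?thesis by (simp add: matrix_vector_mult_basis column_def)
qed




lemma dot_tr: "((A::real^'n::finite^'k::finite) *v x) \<bullet> y = x \<bullet> (transpose A *v y)"
  by (metis dot_lmul_matrix vector_transpose_matrix)

lemma key_alg:
  fixes G :: "real^'m^'m::finite" and Gam :: "real^'m \<Rightarrow> real^'m \<Rightarrow> real^'m"
    and dW :: "real^'m \<Rightarrow> real^'m" and W x y z w :: "real^'m" and c :: real
  assumes Gs: "transpose G = G"
    and Gsym: "\<And>a b. Gam a b = Gam b a"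
    and Gadd: "\<And>a u v. Gam a (u + v) = Gam a u + Gam a v"
    and Gsc: "\<And>a r u. Gam a (r *\<^sub>R u) = r *\<^sub>R Gam a u"
  defines "gp \<equiv> \<lambda>u v. u \<bullet> (G *v v)"
  defines "T \<equiv> \<lambda>y. gp y z *\<^sub>R W - gp W z *\<^sub>R y"
  defines "dlt \<equiv> \<lambda>x u v. gp (Gam x u) v + gp u (Gam x v)"
  defines "Dl \<equiv> \<lambda>x y. c *\<^sub>R (dlt x y z *\<^sub>R W + gp y z *\<^sub>R dW x - (gp (dW x) z + dlt x W z) *\<^sub>R y)
       + Gam x (c *\<^sub>R T y) + c *\<^sub>R (gp x (Gam y z + c *\<^sub>R T y) *\<^sub>R W - gp W (Gam y z + c *\<^sub>R T y) *\<^sub>R x)"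
  defines "S \<equiv> \<lambda>u v. c * gp (dW u + Gam u W) v + c^2 * gp W u * gp W v - c^2/2 * gp W W * gp u v"
  shows "gp (Dl x y - Dl y x) w = gp y z * S x w - gp x z * S y w + S y z * gp x w - S x z * gp y w"
proof -
  have gsym: "\<And>u v. gp u v = gp v u" unfolding gp_def
    by (metis Gs dot_lmul_matrix inner_commute transpose_transpose vector_transpose_matrix)
  have ga1: "\<And>u v t. gp (u + v) t = gp u t + gp v t" unfolding gp_def by (simp add: inner_add_left)
  have ga2: "\<And>u v t. gp t (u + v) = gp t u + gp t v" unfolding gp_def by (simp add: matrix_vector_right_distrib inner_add_right)
  have gs1: "\<And>u v t. gp (u - v) t = gp u t - gp v t" unfolding gp_def by (simp add: inner_diff_left)
  have gs2: "\<And>u v t. gp t (u - v) = gp t u - gp t v" unfolding gp_def by (simp add: matrix_vector_mult_diff_distrib inner_diff_right)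
  have gm1: "\<And>u r t. gp (r *\<^sub>R u) t = r * gp u t" unfolding gp_def by simp
  have gm2: "\<And>u r t. gp t (r *\<^sub>R u) = r * gp t u" unfolding gp_def
    by (simp add: matrix_vector_mult_scaleR)
  have Gdiff: "\<And>a u v. Gam a (u - v) = Gam a u - Gam a v"
    by (metis Gadd Gsc add_diff_cancel diff_add_cancel scaleR_minus1_left diff_conv_add_uminus)
  show ?thesis
    unfolding Dl_def T_def dlt_def S_def
    by (simp add: ga1 ga2 gs1 gs2 gm1 gm2 Gadd Gdiff Gsc algebra_simps power2_eq_square gsym Gsym)
qed



lemma sum_bil: "(\<Sum>i\<in>UNIV. \<Sum>j\<in>UNIV. (A::real^'n::finite^'m::finite)$i$j * (a$i * b$j)) = a \<bullet> (A *v b)"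
  by (simp add: inner_vec_def matrix_vector_mult_def sum_distrib_left mult_ac)


lemma gv_axis_left: "gv g p (axis i 1) z = (g p *v z)$i"
  by (simp add: gv_def inner_axis')
lemma gv_axis_right: "gv g p y (axis j 1) = (transpose (g p) *v y)$j"
  by (simp add: gv_def inner_vec_def matrix_vector_mult_def transpose_def axis_def
      if_distrib mult.commute cong: if_cong)

lemma gv_axis_both: "gv g p (axis i 1) (axis j 1) = g p $ i $ j"
  by (simp add: gv_axis_left matrix_vector_mult_basis column_def)

lemma weyl_invariant:
  fixes g :: "real^'m \<Rightarrow> real^'m^'m::finite" and S :: "real^'m \<Rightarrow> real^'m \<Rightarrow> real"
  assumes cv: "\<And>x y z w. curv g cv' p x y z w = curv g cv p x y z w +
      (gv g p y z * S x w - gv g p x z * S y w + S y z * gv g p x w - S x z * gv g p y w)"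
    and S1: "\<And>u v. S u v = (\<Sum>i\<in>UNIV. u$i * S (axis i 1) v)"
    and S2: "\<And>u v. S u v = (\<Sum>j\<in>UNIV. v$j * S u (axis j 1))"
    and Gs: "transpose (g p) = g p"
    and L: "ginv g p ** g p = mat 1" and R: "g p ** ginv g p = mat 1"
    and card: "CARD('m) = 2 * n" and n2: "n \<ge> 2"
  shows "weyl n g cv p x y z w = weyl n g cv' p x y z w"
proof -
  let ?I = "ginv g p"
  define tr where "tr = (\<Sum>i\<in>UNIV. \<Sum>j\<in>UNIV. ?I$i$j * S (axis i 1) (axis j 1))"
  have a: "(\<Sum>i\<in>UNIV. \<Sum>j\<in>UNIV. ?I$i$j * gv g p (axis i 1) (axis j 1)) = real (2*n)"
  proof -
    have "(\<Sum>i\<in>UNIV. \<Sum>j\<in>UNIV. ?I$i$j * gv g p (axis i 1) (axis j 1))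
        = (\<Sum>i\<in>UNIV. (?I ** transpose (g p))$i$i)"
      by (simp add: gv_axis_both matrix_matrix_mult_def transpose_def)
    also have "\<dots> = real (2*n)" using L Gs card by (simp add: mat_def)
    finally show ?thesis .
  qed
  have b: "(\<Sum>i\<in>UNIV. \<Sum>j\<in>UNIV. ?I$i$j * (gv g p (axis i 1) z * S y (axis j 1))) = S y z" for y z
  proof -
    have "(\<Sum>i\<in>UNIV. \<Sum>j\<in>UNIV. ?I$i$j * (gv g p (axis i 1) z * S y (axis j 1)))
       = (g p *v z) \<bullet> (?I *v (\<chi> j. S y (axis j 1)))"
      by (simp add: gv_axis_left sum_bil[symmetric])
    also have "\<dots> = z \<bullet> (\<chi> j. S y (axis j 1))"
      by (simp add: dot_tr Gs matrix_vector_mul_assoc R)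
    also have "\<dots> = S y z" using S2[of y z] by (simp add: inner_vec_def mult_ac)
    finally show ?thesis .
  qed
  have c: "(\<Sum>i\<in>UNIV. \<Sum>j\<in>UNIV. ?I$i$j * (S (axis i 1) z * gv g p y (axis j 1))) = S y z" for y z
  proof -
    have "(\<Sum>i\<in>UNIV. \<Sum>j\<in>UNIV. ?I$i$j * (S (axis i 1) z * gv g p y (axis j 1)))
       = (\<chi> i. S (axis i 1) z) \<bullet> (?I *v (g p *v y))"
      by (simp add: gv_axis_right Gs sum_bil[symmetric])
    also have "\<dots> = (\<chi> i. S (axis i 1) z) \<bullet> y"
      by (simp add: matrix_vector_mul_assoc L)
    also have "\<dots> = S y z" using S1[of y z] by (simp add: inner_vec_def mult_ac)
    finally show ?thesis .
  qed
  have ric: "ricci g cv' p y z = ricci g cv p y z + tr * gv g p y z + (real (2*n) - 2) * S y z" for y z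
  proof -
    have "ricci g cv' p y z = ricci g cv p y z
       + gv g p y z * (\<Sum>i\<in>UNIV. \<Sum>j\<in>UNIV. ?I$i$j * S (axis i 1) (axis j 1))
       - (\<Sum>i\<in>UNIV. \<Sum>j\<in>UNIV. ?I$i$j * (gv g p (axis i 1) z * S y (axis j 1)))
       + S y z * (\<Sum>i\<in>UNIV. \<Sum>j\<in>UNIV. ?I$i$j * gv g p (axis i 1) (axis j 1))
       - (\<Sum>i\<in>UNIV. \<Sum>j\<in>UNIV. ?I$i$j * (S (axis i 1) z * gv g p y (axis j 1)))"
      unfolding ricci_def cv
      by (simp add: algebra_simps sum.distrib sum_subtractf sum_distrib_left)
    then show ?thesis using a b[of z y] c[of z y] unfolding tr_def by (simp add: algebra_simps)
  qed
  have sc: "scal g cv' p = scal g cv p + tr * real (2*n) + (real (2*n) - 2) * tr"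
  proof -
    have "scal g cv' p = scal g cv p + tr * (\<Sum>i\<in>UNIV. \<Sum>j\<in>UNIV. ?I$i$j * gv g p (axis i 1) (axis j 1))
        + (real (2*n) - 2) * (\<Sum>i\<in>UNIV. \<Sum>j\<in>UNIV. ?I$i$j * S (axis i 1) (axis j 1))"
      unfolding scal_def ric
      by (simp add: algebra_simps sum.distrib sum_subtractf sum_distrib_left)
    then show ?thesis using a by (simp add: tr_def)
  qed
  have n1: "real n - 1 \<noteq> 0" "2 * real n - 1 \<noteq> 0" using n2 by auto
  have n3: "2 + real n * (real n * 4) - real n * 6 \<noteq> 0"
  proof -
    have "2 + real n * (real n * 4) - real n * 6 = 2 * (real n - 1) * (2 * real n - 1)" by algebra
    then show ?thesis using n1 by simp
  qed
  show ?thesis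
    unfolding weyl_def psi1_def pi1_def ric sc cv
    using n1 n3 by (simp add: field_simps)
qed



lemma matrix_inv_props:
  fixes A :: "real^'n::finite^'n"
  assumes "invertible A"
  shows "A ** matrix_inv A = mat 1" "matrix_inv A ** A = mat 1"
  using assms unfolding invertible_def matrix_inv_def by (metis (mono_tags, lifting) someI_ex)+

lemma dl_mv: "(\<And>i j. dl k (\<lambda>q. M q $ i $ j) p) \<Longrightarrow> (\<And>j. dl k (\<lambda>q. v q $ j) p)
   \<Longrightarrow> dl k (\<lambda>q. (M q *v v q) $ i) p"
  unfolding matrix_vector_mult_def by (simp add: dl_sum dl_mult)

lemma dl_inner: "(\<And>j. dl k (\<lambda>q. u q $ j) p) \<Longrightarrow> (\<And>j. dl k (\<lambda>q. v q $ j) p)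
   \<Longrightarrow> dl k (\<lambda>q. u q \<bullet> v q) p"
  unfolding inner_vec_def by (simp add: dl_sum dl_mult)

lemma dl_gv: "(\<And>i j. dl k (\<lambda>q. g q $ i $ j) p) \<Longrightarrow> (\<And>j. dl k (\<lambda>q. u q $ j) p) \<Longrightarrow> (\<And>j. dl k (\<lambda>q. v q $ j) p)
   \<Longrightarrow> dl k (\<lambda>q. gv g q (u q) (v q)) p"
  unfolding gv_def by (intro dl_inner dl_mv)

locale apm =
  fixes U :: "(real^'m::finite) set" and g P :: "real^'m \<Rightarrow> real^'m^'m"
  assumes opn: "open U" and rm: "riemannian_metric_on U g" and ap: "almost_product_on U P g"
begin

lemma Gs: "p \<in> U \<Longrightarrow> transpose (g p) = g p"
  using rm unfolding riemannian_metric_on_def by blast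

lemma gsym: assumes "p \<in> U" shows "g p $ i $ j = g p $ j $ i"
proof -
  have "transpose (g p) $ j $ i = g p $ j $ i" using Gs[OF assms] by simp
  then show ?thesis by (simp add: transpose_def)
qed

lemma g_inv: assumes "p \<in> U" shows "invertible (g p)"
proof -
  have "\<forall>x. g p *v x = 0 \<longrightarrow> x = 0"
  proof (intro allI impI)
    fix x assume "g p *v x = 0"
    then have "gv g p x x = 0" by (simp add: gv_def)
    moreover have "x \<noteq> 0 \<Longrightarrow> gv g p x x > 0" using rm assms unfolding riemannian_metric_on_def by blast
    ultimately show "x = 0" by force
  qed
  then show ?thesis using matrix_left_invertible_ker invertible_left_inverse by blast
qed

lemma ginvL: "p \<in> U \<Longrightarrow> ginv g p ** g p = mat 1"
  by (simp add: ginv_def g_inv matrix_inv_props)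
lemma ginvR: "p \<in> U \<Longrightarrow> g p ** ginv g p = mat 1"
  by (simp add: ginv_def g_inv matrix_inv_props)

lemma g_dl: "p \<in> U \<Longrightarrow> dl k (\<lambda>q. g q $ i $ j) p"
  using rm smooth_dl unfolding riemannian_metric_on_def by blast
lemma g_pd_dl: "p \<in> U \<Longrightarrow> dl k (pd l (\<lambda>q. g q $ i $ j)) p"
  using rm smooth_dl_pd unfolding riemannian_metric_on_def by blast
lemma P_dl: "p \<in> U \<Longrightarrow> dl k (\<lambda>q. P q $ i $ j) p"
  using ap smooth_dl unfolding almost_product_on_def by blast
lemma P_pd_dl: "p \<in> U \<Longrightarrow> dl k (pd l (\<lambda>q. P q $ i $ j)) p"
  using ap smooth_dl_pd unfolding almost_product_on_def by blast

lemma ginv_dl: assumes p: "p \<in> U" shows "dl k (\<lambda>q. ginv g q $ a $ b) p"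
proof -
  have "dl k (\<lambda>q. det (\<chi> i j. if j = a then axis b 1 $ i else g q$i$j) / det (g q)) p"
  proof (rule dl_div)
    show "dl k (\<lambda>q. det (\<chi> i j. if j = a then axis b 1 $ i else g q$i$j)) p"
      by (rule dl_det) (case_tac "j = a", auto simp: g_dl p)
    show "dl k (\<lambda>q. det (g q)) p" by (rule dl_det) (auto simp: g_dl p)
    show "det (g p) \<noteq> 0" using g_inv[OF p] invertible_det_nz by blast
  qed
  moreover have "dl k (\<lambda>q. ginv g q $ a $ b) p = dl k (\<lambda>q. det (\<chi> i j. if j = a then axis b 1 $ i else g q$i$j) / det (g q)) p"
    by (rule dl_cong[OF opn p]) (unfold ginv_def, rule inv_entry[OF g_inv])
  ultimately show ?thesis by simp
qed

lemma christ_dl: "p \<in> U \<Longrightarrow> dl k (\<lambda>q. christ g q i j s) p"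
  unfolding christ_def
  by (intro dl_mult dl_const dl_sum dl_add dl_diff ginv_dl g_pd_dl) simp_all

lemma pdg_sym: "p \<in> U \<Longrightarrow> pd l (\<lambda>q. g q $ i $ j) p = pd l (\<lambda>q. g q $ j $ i) p"
  by (rule pd_cong[OF opn]) (auto simp: gsym)

lemma christ_sym: "p \<in> U \<Longrightarrow> christ g p i j s = christ g p j i s"
  unfolding christ_def by (simp add: pdg_sym[of p _ i j] algebra_simps)


lemma pd_Pv: "q \<in> U \<Longrightarrow> pd i (\<lambda>q'. (P q' *v y) $ s) q = (\<Sum>b\<in>UNIV. pd i (\<lambda>q'. P q' $ s $ b) q * y $ b)"
  unfolding matrix_vector_mult_def
  by (simp add: pd_sum pd_mult P_dl dl_mult)

lemma dl_pdPv: "p \<in> U \<Longrightarrow> dl k (\<lambda>q. pd i (\<lambda>q'. (P q' *v y) $ s) q) p"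
proof -
  assume p: "p \<in> U"
  have "dl k (\<lambda>q. \<Sum>b\<in>UNIV. pd i (\<lambda>q'. P q' $ s $ b) q * y $ b) p"
    by (intro dl_sum dl_mult P_pd_dl p dl_const) simp
  moreover have "dl k (\<lambda>q. pd i (\<lambda>q'. (P q' *v y) $ s) q) p = dl k (\<lambda>q. \<Sum>b\<in>UNIV. pd i (\<lambda>q'. P q' $ s $ b) q * y $ b) p"
    by (rule dl_cong[OF opn p]) (rule pd_Pv)
  ultimately show ?thesis by simp
qed

lemma dl_LC_P: "p \<in> U \<Longrightarrow> dl k (\<lambda>q. LC g (\<lambda>_. x) (\<lambda>q'. P q' *v y) q $ s) p"
  unfolding LC_def
  by (simp, intro dl_sum dl_mult dl_add dl_const dl_pdPv christ_dl dl_mv P_dl) simp_all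

lemma dl_LC_c: "p \<in> U \<Longrightarrow> dl k (\<lambda>q. LC g (\<lambda>_. x) (\<lambda>_. y) q $ s) p"
  unfolding LC_def
  by (simp, intro dl_sum dl_mult dl_const christ_dl) simp_all

lemma dl_Ften: "p \<in> U \<Longrightarrow> dl k (\<lambda>q. Ften g P q x y z) p"
  unfolding Ften_def
  by (intro dl_gv g_dl dl_const) (simp_all add: dl_diff dl_LC_P dl_mv P_dl dl_LC_c)

lemma dl_lee: "p \<in> U \<Longrightarrow> dl k (\<lambda>q. lee g P q u) p"
  unfolding lee_def by (intro dl_sum dl_mult ginv_dl dl_Ften) simp_all

lemma dl_Omega: "p \<in> U \<Longrightarrow> dl k (\<lambda>q. Omega g P q $ s) p"
  unfolding Omega_def by (intro dl_mv ginv_dl) (simp_all add: dl_lee)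

lemma dl_WP: "p \<in> U \<Longrightarrow> dl k (\<lambda>q. (P q *v Omega g P q) $ s) p"
  by (intro dl_mv P_dl dl_Omega)



lemma dot_tr2: "x \<bullet> ((A::real^'n::finite^'k::finite) *v y) = (transpose A *v x) \<bullet> y"
  by (metis dot_lmul_matrix inner_commute vector_transpose_matrix)

lemma lee_lin: "lee g P q u = (\<chi> k. lee g P q (axis k 1)) \<bullet> u"
proof -
  define Lv where "Lv = (\<Sum>i\<in>UNIV. \<Sum>j\<in>UNIV. ginv g q $ i $ j *\<^sub>R (transpose (g q) *v
     (LC g (\<lambda>_. axis i 1) (\<lambda>q. P q *v axis j 1) q - P q *v LC g (\<lambda>_. axis i 1) (\<lambda>_. axis j 1) q)))"
  have L: "lee g P q v = Lv \<bullet> v" for v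
    unfolding lee_def Ften_def gv_def Lv_def dot_tr2
    by (simp add: inner_sum_left)
  have "Lv = (\<chi> k. lee g P q (axis k 1))"
    by (simp add: vec_eq_iff L inner_axis)
  then show ?thesis using L by simp
qed

lemma gv_Omega: assumes "q \<in> U" shows "gv g q (Omega g P q) u = lee g P q u"
proof -
  have "gv g q (Omega g P q) u = (\<chi> k. lee g P q (axis k 1)) \<bullet> (transpose (ginv g q) *v (g q *v u))"
    unfolding gv_def Omega_def by (rule dot_tr)
  also have "transpose (ginv g q) *v (g q *v u) = (transpose (ginv g q) ** g q) *v u"
    by (rule matrix_vector_mul_assoc)
  also have "transpose (ginv g q) ** g q = mat 1"
  proof -
    have "transpose (ginv g q) ** g q = transpose (transpose (g q) ** ginv g q)"
      by (simp add: matrix_transpose_mul)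
    also have "\<dots> = mat 1" using Gs[OF assms] ginvR[OF assms] by (simp add: transpose_mat)
    finally show ?thesis .
  qed
  finally have "gv g q (Omega g P q) u = (\<chi> k. lee g P q (axis k 1)) \<bullet> u" by simp
  then show ?thesis by (simp only: lee_lin[of q u, symmetric])
qed

lemma gv_P: assumes "q \<in> U" shows "gv g q (P q *v u) v = gv g q u (P q *v v)"
proof -
  have PP: "P q ** P q = mat 1" and c: "\<And>u v. gv g q (P q *v u) (P q *v v) = gv g q u v"
    using ap assms unfolding almost_product_on_def by blast+
  have "gv g q (P q *v u) v = gv g q (P q *v (P q *v u)) (P q *v v)" by (rule c[symmetric])
  also have "P q *v (P q *v u) = u" by (simp add: matrix_vector_mul_assoc PP)
  finally show ?thesis .
qed

lemma lee_P: "q \<in> U \<Longrightarrow> lee g P q (P q *v z) = gv g q (P q *v Omega g P q) z"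
  by (simp add: gv_P gv_Omega)


definition Chm where "Chm p i = (\<chi> s j. christ g p i j s)"
definition Gam where "Gam p x u = (\<Sum>i\<in>UNIV. x$i *\<^sub>R (Chm p i *v u))"
definition dG where "dG p i = (\<chi> a b. pd i (\<lambda>q. g q $ a $ b) p)"
definition Cm where "Cm p i = (\<chi> l j. pd i (\<lambda>q. g q $ j $ l) p + pd j (\<lambda>q. g q $ i $ l) p - pd l (\<lambda>q. g q $ i $ j) p)"
definition dv where "dv F x p = (\<chi> s. \<Sum>i\<in>UNIV. x$i * pd i (\<lambda>q. F q $ s) p)"

lemma LC_const: "LC g (\<lambda>_. x) (\<lambda>_. u) q = Gam q x u"
  unfolding LC_def Gam_def Chm_def
  by (simp add: vec_eq_iff matrix_vector_mult_def sum_component)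

lemma LC_field: "LC g (\<lambda>_. x) F p = dv F x p + Gam p x (F p)"
  unfolding LC_def Gam_def Chm_def dv_def
  by (simp add: vec_eq_iff matrix_vector_mult_def sum_component distrib_left sum.distrib)

lemma Gam_sym: assumes "p \<in> U" shows "Gam p x u = Gam p u x"
proof -
  have "\<And>s. (\<Sum>i\<in>UNIV. x$i * (\<Sum>j\<in>UNIV. christ g p i j s * u$j))
          = (\<Sum>i\<in>UNIV. u$i * (\<Sum>j\<in>UNIV. christ g p i j s * x$j))"
  proof -
    fix s
    have "(\<Sum>i\<in>UNIV. x$i * (\<Sum>j\<in>UNIV. christ g p i j s * u$j))
        = (\<Sum>i\<in>UNIV. \<Sum>j\<in>UNIV. x$i * christ g p i j s * u$j)"
      by (simp add: sum_distrib_left mult_ac)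
    also have "\<dots> = (\<Sum>j\<in>UNIV. \<Sum>i\<in>UNIV. x$i * christ g p i j s * u$j)"
      by (rule sum.swap)
    also have "\<dots> = (\<Sum>j\<in>UNIV. u$j * (\<Sum>i\<in>UNIV. christ g p j i s * x$i))"
      by (simp add: sum_distrib_left christ_sym[OF assms, of _ _ s] mult_ac)
    finally show "(\<Sum>i\<in>UNIV. x$i * (\<Sum>j\<in>UNIV. christ g p i j s * u$j))
          = (\<Sum>i\<in>UNIV. u$i * (\<Sum>j\<in>UNIV. christ g p i j s * x$j))" .
  qed
  then show ?thesis unfolding Gam_def Chm_def
    by (simp add: vec_eq_iff matrix_vector_mult_def sum_component)
qed

lemma Gam_add2: "Gam p x (u + v) = Gam p x u + Gam p x v"
  unfolding Gam_def by (simp add: matrix_vector_right_distrib scaleR_add_right sum.distrib)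
lemma Gam_sc2: "Gam p x (r *\<^sub>R u) = r *\<^sub>R Gam p x u"
  unfolding Gam_def by (simp add: matrix_vector_mult_scaleR scaleR_sum_right mult.commute)
lemma Gam_lin1: "Gam p x u = (\<Sum>i\<in>UNIV. x$i *\<^sub>R Gam p (axis i 1) u)"
  unfolding Gam_def by (simp add: axis_def if_distrib[where f="\<lambda>a. a *\<^sub>R w" for w] cong: if_cong)

lemma mat_scaleR_right: "(A::real^'n::finite^'k::finite) ** (c *\<^sub>R B) = c *\<^sub>R (A ** B)"
  by (simp add: vec_eq_iff matrix_matrix_mult_def sum_distrib_left mult_ac)

lemma Chm_eq: "Chm p i = (1/2) *\<^sub>R (ginv g p ** Cm p i)"
  unfolding Chm_def Cm_def christ_def
  by (simp add: vec_eq_iff matrix_matrix_mult_def)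

lemma G_Chm: assumes "p \<in> U" shows "g p ** Chm p i = (1/2) *\<^sub>R Cm p i"
  unfolding Chm_eq mat_scaleR_right matrix_mul_assoc ginvR[OF assms] matrix_mul_lid ..

lemma Cm_dG: assumes "p \<in> U" shows "(1/2) *\<^sub>R transpose (Cm p i) + (1/2) *\<^sub>R Cm p i = dG p i"
  unfolding Cm_def dG_def transpose_def
  using pdg_sym[OF assms, of i] by (simp add: vec_eq_iff field_simps)

lemma compat_i: assumes p: "p \<in> U"
  shows "u \<bullet> (dG p i *v v) = gv g p (Chm p i *v u) v + gv g p u (Chm p i *v v)"
proof -
  have 1: "gv g p (Chm p i *v u) v = u \<bullet> ((transpose (Chm p i) ** g p) *v v)"
    unfolding gv_def dot_tr by (simp only: matrix_vector_mul_assoc)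
  have 2: "transpose (Chm p i) ** g p = (1/2) *\<^sub>R transpose (Cm p i)"
  proof -
    have "transpose (Chm p i) ** g p = transpose (transpose (g p) ** Chm p i)"
      by (simp only: matrix_transpose_mul transpose_transpose)
    also have "\<dots> = (1/2) *\<^sub>R transpose (Cm p i)"
      by (simp only: Gs[OF p] G_Chm[OF p] transpose_scalar)
    finally show ?thesis .
  qed
  have 3: "gv g p u (Chm p i *v v) = u \<bullet> ((1/2) *\<^sub>R Cm p i *v v)"
    unfolding gv_def by (simp only: matrix_vector_mul_assoc G_Chm[OF p])
  have "u \<bullet> (dG p i *v v) = u \<bullet> (((1/2) *\<^sub>R transpose (Cm p i) + (1/2) *\<^sub>R Cm p i) *v v)"
    by (simp only: Cm_dG[OF p])
  also have "\<dots> = u \<bullet> ((1/2) *\<^sub>R transpose (Cm p i) *v v) + u \<bullet> ((1/2) *\<^sub>R Cm p i *v v)"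
    by (simp only: matrix_vector_mult_add_rdistrib inner_add_right)
  finally show ?thesis using 1 2 3 by simp
qed

lemma mv_sum: "(A::real^'n::finite^'k::finite) *v (\<Sum>i\<in>S. f i) = (\<Sum>i\<in>S. A *v f i)"
  by (induction S rule: infinite_finite_induct) (simp_all add: matrix_vector_right_distrib)

lemma compat: assumes p: "p \<in> U"
  shows "(\<Sum>i\<in>UNIV. x$i * (u \<bullet> (dG p i *v v))) = gv g p (Gam p x u) v + gv g p u (Gam p x v)"
  unfolding compat_i[OF p] Gam_def gv_def
  by (simp add: inner_sum_left inner_sum_right matrix_vector_mult_scaleR mv_sum
      distrib_left sum.distrib)


definition WP where "WP q = P q *v Omega g P q"
definition dWi where "dWi p i = (\<chi> a. pd i (\<lambda>q. WP q $ a) p)"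

lemma lie_const: "lie (\<lambda>_. x) (\<lambda>_. y) = (\<lambda>_. 0)"
  unfolding lie_def by (rule ext) (simp add: vec_eq_iff)

lemma Gam_0: "Gam q 0 u = 0" unfolding Gam_def by simp

lemma LC_0: "LC g (\<lambda>_. 0) (\<lambda>_. z) q = 0" by (simp add: LC_const Gam_0)
lemma D_0: "Dconn n g P (\<lambda>_. 0) (\<lambda>_. z) q = 0" unfolding Dconn_def by (simp add: LC_0 gv_def)

lemma D_U: "q \<in> U \<Longrightarrow> Dconn n g P (\<lambda>_. y) (\<lambda>_. z) q =
   Gam q y z + (1 / (2 * real n)) *\<^sub>R (gv g q y z *\<^sub>R WP q - gv g q (WP q) z *\<^sub>R y)"
  unfolding Dconn_def by (simp add: LC_const lee_P WP_def)

lemma pd_gv_c: assumes p: "p \<in> U" shows "pd i (\<lambda>q. gv g q u v) p = u \<bullet> (dG p i *v v)"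
proof -
  have "pd i (\<lambda>q. gv g q u v) p = pd i (\<lambda>q. \<Sum>a\<in>UNIV. u$a * (\<Sum>b\<in>UNIV. g q $ a $ b * v$b)) p"
    unfolding gv_def inner_vec_def matrix_vector_mult_def by simp
  also have "\<dots> = (\<Sum>a\<in>UNIV. u$a * (\<Sum>b\<in>UNIV. pd i (\<lambda>q. g q $ a $ b) p * v$b))"
    by (simp add: pd_sum pd_mult dl_sum dl_mult g_dl[OF p])
  finally show ?thesis unfolding dG_def inner_vec_def matrix_vector_mult_def by simp
qed

lemma pd_gv_f: assumes p: "p \<in> U" and F: "\<And>a. dl i (\<lambda>q. F q $ a) p"
  shows "pd i (\<lambda>q. gv g q (F q) v) p = (\<chi> a. pd i (\<lambda>q. F q $ a) p) \<bullet> (g p *v v) + F p \<bullet> (dG p i *v v)"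
proof -
  have "pd i (\<lambda>q. gv g q (F q) v) p = pd i (\<lambda>q. \<Sum>a\<in>UNIV. F q $ a * (\<Sum>b\<in>UNIV. g q $ a $ b * v$b)) p"
    unfolding gv_def inner_vec_def matrix_vector_mult_def by simp
  also have "\<dots> = (\<Sum>a\<in>UNIV. pd i (\<lambda>q. F q $ a) p * (\<Sum>b\<in>UNIV. g p $ a $ b * v$b)
       + F p $ a * (\<Sum>b\<in>UNIV. pd i (\<lambda>q. g q $ a $ b) p * v$b))"
    by (simp add: pd_sum pd_mult dl_sum dl_mult g_dl[OF p] F)
  finally show ?thesis unfolding dG_def inner_vec_def matrix_vector_mult_def by (simp add: sum.distrib)
qed

lemma dl_Gam: "p \<in> U \<Longrightarrow> dl k (\<lambda>q. Gam q y z $ s) p"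
  using dl_LC_c by (simp add: LC_const)

lemma dl_gvc: "p \<in> U \<Longrightarrow> dl k (\<lambda>q. gv g q u v) p"
  by (intro dl_gv g_dl) simp_all

lemma dl_gvWP: "p \<in> U \<Longrightarrow> dl k (\<lambda>q. gv g q (WP q) v) p"
  by (intro dl_gv g_dl) (simp_all add: WP_def dl_WP)

lemma dl_WP': "p \<in> U \<Longrightarrow> dl k (\<lambda>q. WP q $ s) p"
  by (simp add: WP_def dl_WP)

lemma pd_D: assumes p: "p \<in> U"
  shows "pd i (\<lambda>q. Dconn n g P (\<lambda>_. y) (\<lambda>_. z) q $ s) p
    = pd i (\<lambda>q. Gam q y z $ s) p + (1 / (2 * real n)) * ((y \<bullet> (dG p i *v z)) * WP p $ s
       + gv g p y z * dWi p i $ s - (dWi p i \<bullet> (g p *v z) + WP p \<bullet> (dG p i *v z)) * y $ s)"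
proof -
  define c where "c = 1 / (2 * real n)"
  have "pd i (\<lambda>q. Dconn n g P (\<lambda>_. y) (\<lambda>_. z) q $ s) p
     = pd i (\<lambda>q. Gam q y z $ s + c * (gv g q y z * WP q $ s - gv g q (WP q) z * y $ s)) p"
    by (rule pd_cong[OF opn p]) (simp add: D_U c_def)
  also have "\<dots> = pd i (\<lambda>q. Gam q y z $ s) p + c * (pd i (\<lambda>q. gv g q y z) p * WP p $ s
       + gv g p y z * pd i (\<lambda>q. WP q $ s) p - pd i (\<lambda>q. gv g q (WP q) z) p * y $ s)"
    by (simp add: pd_add pd_mult pd_diff dl_add dl_mult dl_diff dl_Gam dl_gvc dl_gvWP dl_WP' p)
  also have "\<dots> = pd i (\<lambda>q. Gam q y z $ s) p + c * ((y \<bullet> (dG p i *v z)) * WP p $ s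
       + gv g p y z * dWi p i $ s - (dWi p i \<bullet> (g p *v z) + WP p \<bullet> (dG p i *v z)) * y $ s)"
    by (simp add: pd_gv_c[OF p] pd_gv_f[OF p dl_WP'[OF p]] dWi_def)
  finally show ?thesis unfolding c_def .
qed


lemma dv_alt: "dv F x p = (\<Sum>i\<in>UNIV. x$i *\<^sub>R (\<chi> a. pd i (\<lambda>q. F q $ a) p))"
  unfolding dv_def by (simp add: vec_eq_iff sum_component)

lemma gv_dvWP: "gv g p (dv WP x p) z = (\<Sum>i\<in>UNIV. x$i * (dWi p i \<bullet> (g p *v z)))"
  unfolding dv_alt gv_def dWi_def by (simp add: inner_sum_left)

lemma dvF: assumes p: "p \<in> U"
  shows "dv (Dconn n g P (\<lambda>_. y) (\<lambda>_. z)) x p = dv (\<lambda>q. Gam q y z) x p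
    + (1 / (2 * real n)) *\<^sub>R ((\<Sum>i\<in>UNIV. x$i * (y \<bullet> (dG p i *v z))) *\<^sub>R WP p + gv g p y z *\<^sub>R dv WP x p
       - (gv g p (dv WP x p) z + (\<Sum>i\<in>UNIV. x$i * (WP p \<bullet> (dG p i *v z)))) *\<^sub>R y)"
  unfolding gv_dvWP
  unfolding dv_def
  by (simp add: vec_eq_iff pd_D[OF p] dWi_def sum_distrib_left sum_distrib_right sum.distrib
      sum_subtractf algebra_simps)


definition Dl where "Dl p n x y z = (let c = 1 / (2 * real n); W = WP p;
   T = gv g p y z *\<^sub>R W - gv g p W z *\<^sub>R y in
   c *\<^sub>R ((gv g p (Gam p x y) z + gv g p y (Gam p x z)) *\<^sub>R W + gv g p y z *\<^sub>R dv WP x p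
      - (gv g p (dv WP x p) z + (gv g p (Gam p x W) z + gv g p W (Gam p x z))) *\<^sub>R y)
   + Gam p x (c *\<^sub>R T) + c *\<^sub>R (gv g p x (Gam p y z + c *\<^sub>R T) *\<^sub>R W - gv g p W (Gam p y z + c *\<^sub>R T) *\<^sub>R x))"

lemma LC_LC: "LC g (\<lambda>_. x) (LC g (\<lambda>_. y) (\<lambda>_. z)) p = dv (\<lambda>q. Gam q y z) x p + Gam p x (Gam p y z)"
proof -
  have "LC g (\<lambda>_. y) (\<lambda>_. z) = (\<lambda>q. Gam q y z)" by (rule ext) (simp add: LC_const)
  then show ?thesis by (simp add: LC_field)
qed

lemma Dconn_X: "p \<in> U \<Longrightarrow> Dconn n g P (\<lambda>_. x) F p = LC g (\<lambda>_. x) F p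
   + (1 / (2 * real n)) *\<^sub>R (gv g p x (F p) *\<^sub>R WP p - gv g p (WP p) (F p) *\<^sub>R x)"
  by (simp add: Dconn_def lee_P WP_def)

lemma DD: assumes p: "p \<in> U"
  shows "Dconn n g P (\<lambda>_. x) (Dconn n g P (\<lambda>_. y) (\<lambda>_. z)) p
     = LC g (\<lambda>_. x) (LC g (\<lambda>_. y) (\<lambda>_. z)) p + Dl p n x y z"
proof -
  define c where "c = 1 / (2 * real n)"
  define W where "W = WP p"
  define T where "T = gv g p y z *\<^sub>R W - gv g p W z *\<^sub>R y"
  have Fp: "Dconn n g P (\<lambda>_. y) (\<lambda>_. z) p = Gam p y z + c *\<^sub>R T"
    unfolding D_U[OF p] c_def T_def W_def ..
  have dvF': "dv (Dconn n g P (\<lambda>_. y) (\<lambda>_. z)) x p = dv (\<lambda>q. Gam q y z) x p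
    + c *\<^sub>R ((gv g p (Gam p x y) z + gv g p y (Gam p x z)) *\<^sub>R W + gv g p y z *\<^sub>R dv WP x p
       - (gv g p (dv WP x p) z + (gv g p (Gam p x W) z + gv g p W (Gam p x z))) *\<^sub>R y)"
    unfolding dvF[OF p] c_def W_def
    using compat[OF p, of x y z] compat[OF p, of x "WP p" z] unfolding gv_def by simp
  show ?thesis
    unfolding Dconn_X[OF p] LC_field[of x "Dconn n g P (\<lambda>_. y) (\<lambda>_. z)"] LC_LC Dl_def Let_def
    unfolding dvF' Fp c_def[symmetric] W_def[symmetric] T_def[symmetric]
    by (simp add: Gam_add2 LC_const algebra_simps)
qed


lemma curv_diff: assumes p: "p \<in> U"
  shows "curv g (Dconn n g P) p x y z w = curv g (LC g) p x y z w + gv g p (Dl p n x y z - Dl p n y x z) w"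
  unfolding curv_def Let_def lie_const D_0 LC_0 DD[OF p]
  by (simp add: gv_def inner_diff_left inner_add_left algebra_simps)

lemma gv_lin1: "gv g p u v = (\<Sum>i\<in>UNIV. u$i * gv g p (axis i 1) v)"
  by (simp add: gv_def inner_axis' inner_vec_def[of u])

lemma gv_lin2: "gv g p u v = (\<Sum>j\<in>UNIV. v$j * gv g p u (axis j 1))"
proof -
  have "gv g p u v = (\<Sum>a\<in>UNIV. \<Sum>j\<in>UNIV. u$a * g p $ a $ j * v$j)"
    by (simp add: gv_def inner_vec_def matrix_vector_mult_def sum_distrib_left mult_ac)
  also have "\<dots> = (\<Sum>j\<in>UNIV. \<Sum>a\<in>UNIV. u$a * g p $ a $ j * v$j)" by (rule sum.swap)
  also have "\<dots> = (\<Sum>j\<in>UNIV. v$j * gv g p u (axis j 1))"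
    by (simp add: gv_def inner_vec_def matrix_vector_mult_basis column_def sum_distrib_left mult_ac)
  finally show ?thesis .
qed

lemma dv_lin: "dv F u p = (\<Sum>i\<in>UNIV. u$i *\<^sub>R dv F (axis i 1) p)"
  unfolding dv_alt by (simp add: axis_def if_distrib[where f="\<lambda>a. a *\<^sub>R w" for w] cong: if_cong)

lemma gv_sum_left: "gv g p (\<Sum>i\<in>UNIV. r i *\<^sub>R f i) v = (\<Sum>i\<in>UNIV. r i * gv g p (f i) v)"
  by (simp add: gv_def inner_sum_left)

end

theorem theorem5p1:
  fixes U :: "(real^'m::finite) set" and g P :: "real^'m \<Rightarrow> real^'m^'m" and n :: nat
  assumes "open U"
    and "CARD('m) = 2 * n" and "n \<ge> 2"
    and "riemannian_metric_on U g"
    and "almost_product_on U P g"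
    and "class_W1 n U P g"
  shows "\<forall>p\<in>U. \<forall>x y z w.
           weyl n g (LC g) p x y z w = weyl n g (Dconn n g P) p x y z w"
proof (intro ballI allI)
  fix p x y z w
  assume p: "p \<in> U"
  interpret apm U g P using assms by unfold_locales auto
  define c where "c = 1 / (2 * real n)"
  define S where "S = (\<lambda>u v. c * gv g p (dv WP u p + Gam p u (WP p)) v + c^2 * gv g p (WP p) u * gv g p (WP p) v
      - c^2/2 * gv g p (WP p) (WP p) * gv g p u v)"
  have cvK: "curv g (Dconn n g P) p x y z w = curv g (LC g) p x y z w +
      (gv g p y z * S x w - gv g p x z * S y w + S y z * gv g p x w - S x z * gv g p y w)" for x y z w
  proof -
    have "gv g p (Dl p n x y z - Dl p n y x z) w = gv g p y z * S x w - gv g p x z * S y w + S y z * gv g p x w - S x z * gv g p y w"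
      using key_alg[OF Gs[OF p] Gam_sym[OF p] Gam_add2 Gam_sc2, where dW = "\<lambda>x. dv WP x p" and W = "WP p"
          and c = c and x = x and y = y and z = z and w = w]
      unfolding Dl_def Let_def S_def gv_def c_def by simp
    then show ?thesis using curv_diff[OF p] by simp
  qed
  have S2: "S u v = (\<Sum>j\<in>UNIV. v$j * S u (axis j 1))" for u v
  proof -
    have e1: "gv g p (dv WP u p + Gam p u (WP p)) v = (\<Sum>j\<in>UNIV. v$j * gv g p (dv WP u p + Gam p u (WP p)) (axis j 1))"
      by (rule gv_lin2)
    have e2: "gv g p (WP p) v = (\<Sum>j\<in>UNIV. v$j * gv g p (WP p) (axis j 1))" by (rule gv_lin2)
    have e3: "gv g p u v = (\<Sum>j\<in>UNIV. v$j * gv g p u (axis j 1))" by (rule gv_lin2)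
    show ?thesis unfolding S_def e1 e2 e3
      by (simp add: sum_distrib_left sum_subtractf sum.distrib algebra_simps)
  qed
  have S1: "S u v = (\<Sum>i\<in>UNIV. u$i * S (axis i 1) v)" for u v
  proof -
    have "dv WP u p + Gam p u (WP p) = (\<Sum>i\<in>UNIV. u$i *\<^sub>R (dv WP (axis i 1) p + Gam p (axis i 1) (WP p)))"
      by (subst dv_lin, subst Gam_lin1) (simp add: scaleR_add_right sum.distrib)
    then have e1: "gv g p (dv WP u p + Gam p u (WP p)) v = (\<Sum>i\<in>UNIV. u$i * gv g p (dv WP (axis i 1) p + Gam p (axis i 1) (WP p)) v)"
      by (simp add: gv_sum_left)
    have e2: "gv g p (WP p) u = (\<Sum>i\<in>UNIV. u$i * gv g p (WP p) (axis i 1))" by (rule gv_lin2)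
    have e3: "gv g p u v = (\<Sum>i\<in>UNIV. u$i * gv g p (axis i 1) v)" by (rule gv_lin1)
    show ?thesis unfolding S_def e1 e2 e3
      by (simp add: sum_distrib_left sum_distrib_right sum_subtractf sum.distrib algebra_simps)
  qed
  show "weyl n g (LC g) p x y z w = weyl n g (Dconn n g P) p x y z w"
    by (rule weyl_invariant[OF cvK S1 S2 Gs[OF p] ginvL[OF p] ginvR[OF p] assms(2) assms(3)])
qed

end
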